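(* Let $\mathcal{L}:\mathbb{R}^d\to\mathbb{R}$ be differentiable with $\nabla\mathcal{L}$ Lipschitz continuous with constant $L$. Run full-batch MoFO with $\beta_1<\sqrt{\beta_2}<1$, $\epsilon=0$ and learning rates $\eta_t=\eta/\sqrt t$ ($\eta>0$). Then for every iteration $t\ge1$ and every coordinate $i$, $$g_{i,t}\frac{\hat m_{i,t}}{\sqrt{\hat v_{i,t}}}\ge\sqrt{1-\beta_2}\left(|g_{i,t}|-\left[\frac{2\sqrt2\,\beta_1}{(1-\beta_1)^2}+\frac{4}{1-\beta_2}\right]\frac{LC\eta}{\sqrt t}\right),$$ where $C=\dfrac{\sqrt{d\cdot(\alpha\%)+B}}{\sqrt{1-\beta_2}\,(1-\beta_1/\sqrt{\beta_2})}$.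
   Context: The coordinates of $\mathbb{R}^d$ are partitioned into $B$ blocks of sizes $d_1,\dots,d_B$ with $\sum_kd_k=d$. Fix $\alpha\%\in(0,1]$. For $z\in\mathbb{R}^d$, $\texttt{FLT}_\alpha(z)\in\{0,1\}^d$ equals, in each block $k$, $1$ exactly on a set of $\lceil d_k\cdot\alpha\%\rceil$ indices with the largest absolute values of $z$ within that block (ties broken in favour of smaller indices), and $0$ elsewhere. Full-batch MoFO with $\beta_1,\beta_2\in(0,1)$, learning rates $\eta_t>0$, initial point $\theta_0$: $m_0=v_0=0$; for $t\ge1$, $g_t=\nabla\mathcal{L}(\theta_{t-1})$, $m_t=\beta_1m_{t-1}+(1-\beta_1)g_t$, $v_t=\beta_2v_{t-1}+(1-\beta_2)g_t\odot g_t$, $\hat m_t=m_t/(1-\beta_1^t)$, $\hat v_t=v_t/(1-\beta_2^t)$, $\theta_t=\theta_{t-1}-\eta_t(\hat m_t\odot\texttt{FLT}_\alpha(m_t))/\sqrt{\hat v_t}$ entrywise ($\epsilon=0$: no additive constant in the denominator; a quotient with $\hat v_{i,t}=0$, where necessarily $\hat m_{i,t}=0$, is taken as $0$). Subscript $i,t$ denotes the $i$-th coordinate at iteration $t$. *)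

theory Defs
  imports "HOL-Analysis.Analysis"
begin

text \<open>Coordinates of R^d are the elements of a finite linearly ordered index type 'n
  (d = CARD('n)); the order on 'n is the order of indices used for tie breaking.
  The block partition is given by a block-assignment function blk with values below B;
  block k is the set of coordinates i with blk i = k, of size d_k.\<close>

definition block_size :: "('n::finite \<Rightarrow> nat) \<Rightarrow> nat \<Rightarrow> nat" where
  "block_size blk k = card {i. blk i = k}"

definition block_rank :: "('n::{finite,linorder} \<Rightarrow> nat) \<Rightarrow> (real^'n::{finite,linorder}) \<Rightarrow> 'n::{finite,linorder} \<Rightarrow> nat" where
  "block_rank blk z j = card {i. blk i = blk j \<and>
      (\<bar>z$i\<bar> > \<bar>z$j\<bar> \<or> (\<bar>z$i\<bar> = \<bar>z$j\<bar> \<and> i < j))}"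

text \<open>FLT_alpha(z), with a = alpha% in (0,1].\<close>
definition FLT :: "('n::{finite,linorder} \<Rightarrow> nat) \<Rightarrow> real \<Rightarrow> (real^'n::{finite,linorder}) \<Rightarrow> (real^'n::{finite,linorder})" where
  "FLT blk a z = (\<chi> j. if block_rank blk z j < nat \<lceil>real (block_size blk (blk j)) * a\<rceil>
                        then 1 else 0)"

primrec mofo :: "((real^'n::{finite,linorder}) \<Rightarrow> (real^'n::{finite,linorder})) \<Rightarrow> ('n::{finite,linorder} \<Rightarrow> nat) \<Rightarrow> real
    \<Rightarrow> real \<Rightarrow> real \<Rightarrow> (nat \<Rightarrow> real) \<Rightarrow> (real^'n::{finite,linorder}) \<Rightarrow> nat \<Rightarrow> (real^'n::{finite,linorder}) \<times> (real^'n::{finite,linorder}) \<times> (real^'n::{finite,linorder})" where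
  "mofo G blk a b1 b2 eta th0 0 = (th0, 0, 0)"
| "mofo G blk a b1 b2 eta th0 (Suc t) =
     (let (th, m, v) = mofo G blk a b1 b2 eta th0 t;
          g = G th;
          m' = b1 *\<^sub>R m + (1 - b1) *\<^sub>R g;
          v' = b2 *\<^sub>R v + (1 - b2) *\<^sub>R (\<chi> i. (g$i)^2);
          mh = (1 / (1 - b1 ^ Suc t)) *\<^sub>R m';
          vh = (1 / (1 - b2 ^ Suc t)) *\<^sub>R v';
          f = FLT blk a m';
          th' = th - (\<chi> i. eta (Suc t) * (mh$i * f$i) / sqrt (vh$i))
      in (th', m', v'))"

definition mofo_theta where "mofo_theta G blk a b1 b2 eta th0 t = fst (mofo G blk a b1 b2 eta th0 t)"
definition mofo_m where "mofo_m G blk a b1 b2 eta th0 t = fst (snd (mofo G blk a b1 b2 eta th0 t))"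
definition mofo_v where "mofo_v G blk a b1 b2 eta th0 t = snd (snd (mofo G blk a b1 b2 eta th0 t))"

end

theory Submission
  imports Defs
begin

lemma one_minus_pow_le:
  fixes b :: real assumes "0 \<le> b" "b \<le> 1"
  shows "1 - b ^ t \<le> real t * (1 - b)"
  using Bernoulli_inequality[of "b - 1" t] assms by (simp add: algebra_simps)

lemma sqrt_step:
  fixes t :: real assumes "0 \<le> t"
  shows "2 * sqrt t * (sqrt (t + 1) - sqrt t) \<le> 1"
proof -
  have "0 \<le> (sqrt (t+1) - sqrt t)^2" by simp
  also have "\<dots> = (t+1) + t - 2 * sqrt t * sqrt (t+1)"
    using assms by (simp add: power2_eq_square algebra_simps)
  finally have "2 * sqrt t * sqrt (t+1) \<le> 2 * t + 1" by simp
  moreover have "sqrt t * sqrt t = t" using assms by simp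
  moreover have "2 * sqrt t * (sqrt (t + 1) - sqrt t) = 2 * (sqrt t * sqrt (t+1)) - 2 * (sqrt t * sqrt t)"
    by (simp add: algebra_simps)
  ultimately show ?thesis by linarith
qed

lemma phi_step_ineq:
  fixes b q t :: real
  assumes b: "0 \<le> b" "b < 1" and t: "1 \<le> t" and q: "1 - q \<le> t * (1 - b)" "q \<le> 1"
  shows "b * (2 * (1 - q) / ((1 - b) * sqrt t)) + 1 / sqrt (t + 1)
         \<le> 2 * (1 - b * q) / ((1 - b) * sqrt (t + 1))"
proof -
  have st: "0 < sqrt t" "0 < sqrt (t+1)" using t by auto
  have h1: "2 * sqrt t * (sqrt (t + 1) - sqrt t) \<le> 1" using sqrt_step t by simp
  have d: "0 \<le> sqrt (t+1) - sqrt t" using t by simp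
  have "2 * b * (1 - q) * (sqrt (t + 1) - sqrt t) * sqrt t \<le> b * (1 - q) * 1"
  proof -
    have "0 \<le> b * (1 - q)" using b q by simp
    then have "b * (1 - q) * (2 * sqrt t * (sqrt (t + 1) - sqrt t)) \<le> b * (1 - q) * 1"
      by (rule mult_left_mono[OF h1])
    then show ?thesis by (simp add: algebra_simps)
  qed
  also have "\<dots> \<le> (1 - b) * t"
  proof -
    have "b * (1 - q) \<le> 1 * (1 - q)" using b q by (intro mult_right_mono) auto
    then show ?thesis using q by (simp add: algebra_simps)
  qed
  also have "\<dots> = (1 - b) * sqrt t * sqrt t" using t by simp
  finally have key: "2 * b * (1 - q) * (sqrt (t + 1) - sqrt t) \<le> (1 - b) * sqrt t"
    using st by (metis mult_le_cancel_right_pos mult.assoc)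
  have "(b * (2 * (1 - q) / ((1 - b) * sqrt t)) + 1 / sqrt (t + 1)) * ((1 - b) * sqrt t * sqrt (t+1))
        = 2 * b * (1 - q) * sqrt (t+1) + (1 - b) * sqrt t"
    using st b by (simp add: field_simps)
  also have "\<dots> \<le> 2 * (1 - b * q) * sqrt t"
    using key by (simp add: algebra_simps)
  also have "\<dots> = 2 * (1 - b * q) / ((1 - b) * sqrt (t + 1)) * ((1 - b) * sqrt t * sqrt (t+1))"
    using st b by (simp add: field_simps)
  finally have h: "(b * (2 * (1 - q) / ((1 - b) * sqrt t)) + 1 / sqrt (t + 1)) * ((1 - b) * sqrt t * sqrt (t+1))
     \<le> 2 * (1 - b * q) / ((1 - b) * sqrt (t + 1)) * ((1 - b) * sqrt t * sqrt (t+1))" .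
  have "0 < (1 - b) * sqrt t * sqrt (t+1)" using st b by simp
  from mult_right_le_imp_le[OF h this] show ?thesis .
qed

lemma phi_bound:
  fixes b :: real assumes b: "0 \<le> b" "b < 1"
  shows "(\<Sum>r\<le>n. b ^ (n - r) / sqrt (real r + 1)) \<le> 2 * (1 - b ^ Suc n) / ((1 - b) * sqrt (real n + 1))"
proof (induction n)
  case 0
  then show ?case using b by (simp add: field_simps)
next
  case (Suc n)
  have eq: "(\<Sum>r\<le>Suc n. b ^ (Suc n - r) / sqrt (real r + 1))
      = b * (\<Sum>r\<le>n. b ^ (n - r) / sqrt (real r + 1)) + 1 / sqrt (real (Suc n) + 1)"
    by (simp add: sum_distrib_left Suc_diff_le mult.assoc)
  have q: "1 - b ^ Suc n \<le> real (Suc n) * (1 - b)" using one_minus_pow_le[of b "Suc n"] b by linarith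
  have qq: "b ^ Suc n \<le> 1" using b power_le_one[of b "Suc n"] by linarith
  have "b * (\<Sum>r\<le>n. b ^ (n - r) / sqrt (real r + 1)) \<le> b * (2 * (1 - b ^ Suc n) / ((1 - b) * sqrt (real n + 1)))"
    by (rule mult_left_mono[OF Suc.IH]) (use b in simp)
  then have "(\<Sum>r\<le>Suc n. b ^ (Suc n - r) / sqrt (real r + 1)) \<le>
      b * (2 * (1 - b ^ Suc n) / ((1 - b) * sqrt (real n + 1))) + 1 / sqrt ((real n + 1) + 1)"
    unfolding eq by (simp add: add.commute)
  also have "\<dots> \<le> 2 * (1 - b * b ^ Suc n) / ((1 - b) * sqrt ((real n + 1) + 1))"
    by (rule phi_step_ineq[OF b _ _ qq]) (use q in \<open>auto simp: add.commute\<close>)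
  finally show ?case by (simp add: add.commute)
qed


lemma inv_sqrt_le:
  fixes m :: real assumes m: "1 \<le> m"
  shows "1 / sqrt m \<le> 2 * sqrt 2 * (sqrt (m + 1) - sqrt m)"
proof -
  have sm: "0 < sqrt m" using m by simp
  have p: "(sqrt (m+1) - sqrt m) * (sqrt (m+1) + sqrt m) = 1"
    using m by (simp add: algebra_simps)
  have "sqrt (m+1) \<le> sqrt (2 * m)" using m by simp
  also have "\<dots> = sqrt 2 * sqrt m" by (simp add: real_sqrt_mult)
  finally have "sqrt (m+1) + sqrt m \<le> (sqrt 2 + 1) * sqrt m" by (simp add: algebra_simps)
  also have "\<dots> \<le> 2 * sqrt 2 * sqrt m"
  proof -
    have "1 \<le> sqrt 2" by simp
    then show ?thesis using sm by (intro mult_right_mono) auto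
  qed
  finally have q: "sqrt (m+1) + sqrt m \<le> 2 * sqrt 2 * sqrt m" .
  have pos: "0 < sqrt (m+1) + sqrt m" using add_nonneg_pos[OF real_sqrt_ge_zero sm] using m by simp
  have d: "sqrt (m+1) - sqrt m = 1 / (sqrt (m+1) + sqrt m)"
    using p pos by (simp add: field_simps)
  have "1 / sqrt m = 2 * sqrt 2 * (1 / (2 * sqrt 2 * sqrt m))" using sm by simp
  also have "\<dots> \<le> 2 * sqrt 2 * (1 / (sqrt (m+1) + sqrt m))"
    using q pos sm by (intro mult_left_mono divide_left_mono) (auto intro!: mult_pos_pos)
  finally show ?thesis using d by simp
qed

lemma sum_inv_sqrt:
  assumes "s \<le> n"
  shows "(\<Sum>r\<in>{s..<n}. 1 / sqrt (real r + 1)) \<le> 2 * sqrt 2 * (sqrt (real n + 1) - sqrt (real s + 1))"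
  using assms
proof (induction n)
  case 0
  then show ?case by simp
next
  case (Suc n)
  show ?case
  proof (cases "s = Suc n")
    case True then show ?thesis by simp
  next
    case False
    then have sn: "s \<le> n" using Suc.prems by simp
    have "(\<Sum>r\<in>{s..<Suc n}. 1 / sqrt (real r + 1)) = (\<Sum>r\<in>{s..<n}. 1 / sqrt (real r + 1)) + 1 / sqrt (real n + 1)"
      using sn by simp
    also have "\<dots> \<le> 2 * sqrt 2 * (sqrt (real n + 1) - sqrt (real s + 1)) + 2 * sqrt 2 * (sqrt ((real n + 1) + 1) - sqrt (real n + 1))"
      using Suc.IH[OF sn] inv_sqrt_le[of "real n + 1"] by simp
    also have "\<dots> = 2 * sqrt 2 * (sqrt (real (Suc n) + 1) - sqrt (real s + 1))"
      by (simp add: algebra_simps)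
    finally show ?thesis .
  qed
qed

lemma sum_inv_sqrt':
  assumes "s \<le> n"
  shows "(\<Sum>r\<in>{s..<n}. 1 / sqrt (real r + 1)) \<le> 2 * sqrt 2 * (real n - real s) / sqrt (real n + 1)"
proof -
  have a: "0 < sqrt (real n + 1)" "0 \<le> sqrt (real s + 1)" by auto
  have pr: "(sqrt (real n + 1) - sqrt (real s + 1)) * (sqrt (real n + 1) + sqrt (real s + 1)) = real n - real s"
    by (simp add: algebra_simps)
  have pos: "0 < sqrt (real n + 1) + sqrt (real s + 1)" using add_pos_nonneg[OF a] .
  have "sqrt (real n + 1) - sqrt (real s + 1) = (real n - real s) / (sqrt (real n + 1) + sqrt (real s + 1))"
    using pr pos by (simp add: eq_divide_eq)
  also have "\<dots> \<le> (real n - real s) / sqrt (real n + 1)"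
    using a assms pos by (intro divide_left_mono) (auto intro: mult_pos_pos)
  finally have "sqrt (real n + 1) - sqrt (real s + 1) \<le> (real n - real s) / sqrt (real n + 1)" .
  then have "2 * sqrt 2 * (sqrt (real n + 1) - sqrt (real s + 1)) \<le> 2 * sqrt 2 * ((real n - real s) / sqrt (real n + 1))"
    by (intro mult_left_mono) auto
  with sum_inv_sqrt[OF assms] show ?thesis by simp
qed

lemma moment_closed:
  fixes b :: real
  shows "(1 - b)^3 * (\<Sum>k<N. b ^ k * (real k)^2)
       = b * (1 + b) - b ^ N * ((1 - b)^2 * (real N)^2 + 2 * real N * b * (1 - b) + b * (1 + b))"
proof (induction N)
  case 0
  then show ?case by simp
next
  case (Suc N)
  have "(1 - b)^3 * (\<Sum>k<Suc N. b ^ k * (real k)^2) = (1 - b)^3 * (\<Sum>k<N. b ^ k * (real k)^2) + (1 - b)^3 * (b ^ N * (real N)^2)"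
    by (simp add: distrib_left)
  also have "\<dots> = b * (1 + b) - b ^ N * ((1 - b)^2 * (real N)^2 + 2 * real N * b * (1 - b) + b * (1 + b)) + (1 - b)^3 * (b ^ N * (real N)^2)"
    by (simp only: Suc.IH)
  also have "\<dots> = b * (1 + b) - b ^ Suc N * ((1 - b)^2 * (real (Suc N))^2 + 2 * real (Suc N) * b * (1 - b) + b * (1 + b))"
    by (simp add: power2_eq_square power3_eq_cube algebra_simps)
  finally show ?case .
qed

lemma moment_bound:
  fixes b :: real assumes b: "0 \<le> b" "b < 1"
  shows "(1 - b) * (\<Sum>k\<le>n. b ^ k * (real k)^2) \<le> (1 - b ^ Suc n) * (b * (1 + b) / (1 - b)^2)"
proof -
  have e: "(\<Sum>k\<le>n. b ^ k * (real k)^2) = (\<Sum>k<Suc n. b ^ k * (real k)^2)"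
    by (simp only: lessThan_Suc_atMost)
  have "(1 - b)^3 * (\<Sum>k\<le>n. b ^ k * (real k)^2)
     = b * (1 + b) - b ^ Suc n * ((1 - b)^2 * (real (Suc n))^2 + 2 * real (Suc n) * b * (1 - b) + b * (1 + b))"
    unfolding e by (rule moment_closed)
  also have "\<dots> \<le> b * (1 + b) - b ^ Suc n * (b * (1 + b))"
  proof -
    have "0 \<le> (1 - b)^2 * (real (Suc n))^2 + 2 * real (Suc n) * b * (1 - b)" using b by simp
    then show ?thesis using b by (simp add: mult_left_mono)
  qed
  finally have h: "(1 - b)^3 * (\<Sum>k\<le>n. b ^ k * (real k)^2) \<le> (1 - b ^ Suc n) * (b * (1 + b))"
    by (simp add: algebra_simps)
  have p: "0 < (1 - b)^2" using b by simp
  have "(1 - b) * (\<Sum>k\<le>n. b ^ k * (real k)^2) = (1 - b)^3 * (\<Sum>k\<le>n. b ^ k * (real k)^2) / (1 - b)^2"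
    using p by (simp add: power2_eq_square power3_eq_cube)
  also have "\<dots> \<le> (1 - b ^ Suc n) * (b * (1 + b)) / (1 - b)^2"
    using h p by (intro divide_right_mono) auto
  finally show ?thesis by simp
qed

lemma sum_swap_tri:
  fixes c x :: "nat \<Rightarrow> real"
  shows "(\<Sum>s\<le>n. c s * (\<Sum>r\<in>{s..<n}. x r)) = (\<Sum>r<n. x r * (\<Sum>s\<le>r. c s))"
proof (induction n)
  case 0 then show ?case by simp
next
  case (Suc n)
  have "(\<Sum>s\<le>Suc n. c s * (\<Sum>r\<in>{s..<Suc n}. x r)) = (\<Sum>s\<le>n. c s * (\<Sum>r\<in>{s..<Suc n}. x r))"
    by simp
  also have "\<dots> = (\<Sum>s\<le>n. c s * (\<Sum>r\<in>{s..<n}. x r) + c s * x n)"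
    by (intro sum.cong) (auto simp: algebra_simps)
  also have "\<dots> = (\<Sum>s\<le>n. c s * (\<Sum>r\<in>{s..<n}. x r)) + (\<Sum>s\<le>n. c s * x n)"
    by (rule sum.distrib)
  also have "\<dots> = (\<Sum>r<n. x r * (\<Sum>s\<le>r. c s)) + x n * (\<Sum>s\<le>n. c s)"
    by (subst Suc.IH) (simp add: sum_distrib_left mult.commute)
  finally show ?case by simp
qed

lemma geom_partial:
  fixes b :: real
  assumes "r \<le> n"
  shows "(\<Sum>s\<le>r. (1 - b) * b ^ (n - s)) = b ^ (n - r) - b ^ Suc n"
  using assms
proof (induction r)
  case 0 then show ?case by (simp add: algebra_simps)
next
  case (Suc r)
  have e: "b ^ (n - r) = b * b ^ (n - Suc r)" using Suc.prems
    by (metis Suc_diff_Suc Suc_le_lessD power_Suc)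
  show ?case using Suc by (simp add: e algebra_simps)
qed

lemma A_sum_bound:
  fixes b :: real assumes b: "0 \<le> b" "b < 1"
  shows "(\<Sum>s\<le>n. (1 - b) * b ^ (n - s) * (\<Sum>r\<in>{s..<n}. (1 - b) / (1 - b ^ Suc r) / sqrt (real r + 1)))
     \<le> 2 * (1 - b ^ Suc n) / sqrt (real n + 1)"
proof -
  have "(\<Sum>s\<le>n. (1 - b) * b ^ (n - s) * (\<Sum>r\<in>{s..<n}. (1 - b) / (1 - b ^ Suc r) / sqrt (real r + 1)))
      = (\<Sum>r<n. (1 - b) / (1 - b ^ Suc r) / sqrt (real r + 1) * (\<Sum>s\<le>r. (1 - b) * b ^ (n - s)))"
    by (rule sum_swap_tri)
  also have "\<dots> = (\<Sum>r<n. (1 - b) * b ^ (n - r) / sqrt (real r + 1))"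
  proof (intro sum.cong refl)
    fix r assume r: "r \<in> {..<n}"
    have p: "b ^ Suc r < 1"
    proof -
      have "b ^ r \<le> 1" by (rule power_le_one) (use b in auto)
      then have "b * b ^ r \<le> b * 1" using b by (intro mult_left_mono) auto
      then show ?thesis using b by simp
    qed
    have "b ^ (n - r) * b ^ Suc r = b ^ Suc n" using r
      by (simp add: power_add[symmetric])
    then have "b ^ (n - r) - b ^ Suc n = b ^ (n - r) * (1 - b ^ Suc r)" by (simp add: algebra_simps)
    then have g: "(\<Sum>s\<le>r. (1 - b) * b ^ (n - s)) = b ^ (n - r) * (1 - b ^ Suc r)"
      using geom_partial[of r n b] r by simp
    have ne: "1 - b ^ Suc r \<noteq> 0" using p by simp
    show "(1 - b) / (1 - b ^ Suc r) / sqrt (real r + 1) * (\<Sum>s\<le>r. (1 - b) * b ^ (n - s))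
       = (1 - b) * b ^ (n - r) / sqrt (real r + 1)"
      unfolding g using ne by (simp add: field_simps)
  qed
  also have "\<dots> \<le> (\<Sum>r\<le>n. (1 - b) * b ^ (n - r) / sqrt (real r + 1))"
    using b by (intro sum_mono2) auto
  also have "\<dots> = (1 - b) * (\<Sum>r\<le>n. b ^ (n - r) / sqrt (real r + 1))"
    by (simp add: sum_distrib_left)
  also have "\<dots> \<le> (1 - b) * (2 * (1 - b ^ Suc n) / ((1 - b) * sqrt (real n + 1)))"
    using phi_bound[OF b, of n] b by (intro mult_left_mono) auto
  also have "\<dots> = 2 * (1 - b ^ Suc n) / sqrt (real n + 1)" using b by simp
  finally show ?thesis .
qed


lemma final_alg:
  fixes P S g A D c K X :: real
  assumes c: "0 < c" "c \<le> 1" and g: "0 \<le> g" and P: "P \<ge> g^2 - A * g" and A: "0 \<le> A"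
    and S1: "S \<ge> c * g" and S2: "S \<le> g + D" and D: "0 \<le> D"
    and AD: "A + c * D \<le> K * X" and AK: "A \<le> c^2 * (K * X)" and S0: "S = 0 \<Longrightarrow> P = 0"
  shows "P / S \<ge> c * (g - K * X)"
proof -
  have cD: "0 \<le> c * D" using D c by simp
  have KX: "0 \<le> K * X" using AD A cD by linarith
  have "0 \<le> c * g" using c g by simp
  then have Sge: "S \<ge> 0" using S1 by linarith
  show ?thesis
  proof (cases "S = 0")
    case True
    then have "c * g \<le> 0" using S1 by simp
    then have "g \<le> 0" using c by (simp add: mult_le_0_iff)
    then have "g = 0" using g by simp
    then show ?thesis using True KX c by (simp add: mult_nonneg_nonneg)
  next
    case False
    then have Sp: "S > 0" using Sge by simp
    show ?thesis
    proof (cases "g \<ge> K * X")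
      case True
      then have gA: "g \<ge> A" using AD cD by linarith
      have num: "0 \<le> g * (g - A)" using gA g by simp
      have "P / S \<ge> g * (g - A) / S"
        using P Sp by (intro divide_right_mono) (auto simp: power2_eq_square algebra_simps)
      moreover have "g * (g - A) / S \<ge> g * (g - A) / (g + D)"
        using num Sp S2 by (intro divide_left_mono) auto
      moreover have "g * (g - A) / (g + D) \<ge> c * (g - K * X)"
      proof -
        have gD: "0 < g + D" using Sp S2 by simp
        have b1: "(1 - c) * g + c * (K * X) - A - c * D \<ge> 0"
        proof -
          have "(1 - c) * g \<ge> (1 - c) * (K * X)" using True c by (intro mult_left_mono) auto
          then show ?thesis using AD by (simp add: algebra_simps)
        qed
        have "g * (g - A) - c * (g - K * X) * (g + D)
            = g * ((1 - c) * g + c * (K * X) - A - c * D) + c * (K * X) * D"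
          by (simp add: algebra_simps)
        also have "\<dots> \<ge> 0"
        proof -
          have "0 \<le> c * (K * X) * D" using c KX D by simp
          moreover have "0 \<le> g * ((1 - c) * g + c * (K * X) - A - c * D)" using b1 g by simp
          ultimately show ?thesis by linarith
        qed
        finally have "c * (g - K * X) * (g + D) \<le> g * (g - A)" by simp
        then show ?thesis using gD by (simp add: pos_le_divide_eq)
      qed
      ultimately show ?thesis by linarith
    next
      case False
      show ?thesis
      proof (cases "P \<ge> 0")
        case True
        then have "P / S \<ge> 0" using Sp by simp
        moreover have "c * (g - K * X) \<le> 0" using False c by (simp add: mult_nonneg_nonpos)
        ultimately show ?thesis by linarith
      next
        case Pn: False
        then have neg: "g^2 - A * g < 0" using P by simp
        then have gp: "g > 0" using g by (cases "g = 0") auto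
        have "P / S \<ge> (g^2 - A * g) / S" using P Sp by (intro divide_right_mono) auto
        moreover have "(g^2 - A * g) / S \<ge> (g^2 - A * g) / (c * g)"
        proof -
          have cg: "0 < c * g" using c gp by simp
          have "(g^2 - A * g) * (c * g) \<ge> (g^2 - A * g) * S"
            using neg S1 by (intro mult_left_mono_neg) auto
          then show ?thesis using cg Sp by (simp add: divide_simps)
        qed
        moreover have "(g^2 - A * g) / (c * g) = (g - A) / c"
          using gp c by (simp add: power2_eq_square field_simps)
        moreover have "(g - A) / c \<ge> c * (g - K * X)"
        proof -
          have "(1 - c^2) * g \<ge> 0" using c g by (simp add: power_le_one)
          then have "c * (c * (g - K * X)) \<le> g - A" using AK by (simp add: power2_eq_square algebra_simps)
          then show ?thesis using c by (simp add: pos_le_divide_eq mult.commute)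
        qed
        ultimately show ?thesis by linarith
      qed
    qed
  qed
qed


lemma minkowski_w:
  fixes w y :: "nat \<Rightarrow> real" and g :: real
  assumes w: "\<And>s. 0 \<le> w s"
  shows "sqrt (\<Sum>s\<le>n. w s * (y s)^2) \<le> sqrt (\<Sum>s\<le>n. w s * g^2) + sqrt (\<Sum>s\<le>n. w s * (y s - g)^2)"
proof -
  have sq: "\<And>s z. (sqrt (w s) * z)^2 = w s * z^2" using w by (simp add: power_mult_distrib)
  have eq: "(\<lambda>s. sqrt (w s) * g + sqrt (w s) * (y s - g)) = (\<lambda>s. sqrt (w s) * y s)"
    by (auto simp: algebra_simps)
  have "L2_set (\<lambda>s. sqrt (w s) * y s) {..n}
        \<le> L2_set (\<lambda>s. sqrt (w s) * g) {..n} + L2_set (\<lambda>s. sqrt (w s) * (y s - g)) {..n}"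
    using L2_set_triangle_ineq[of "\<lambda>s. sqrt (w s) * g" "\<lambda>s. sqrt (w s) * (y s - g)" "{..n}"]
    unfolding eq .
  then show ?thesis unfolding L2_set_def sq .
qed

lemma core:
  fixes y E :: "nat \<Rightarrow> real" and n :: nat and b1 b2 X K :: real
  assumes b1: "0 \<le> b1" "b1 < 1" and b2: "0 < b2" "b2 < 1" and X: "0 \<le> X" and K: "4 / (1 - b2) \<le> K"
    and E: "\<And>s. s \<le> n \<Longrightarrow> \<bar>y s - y n\<bar> \<le> E s"
    and SA: "(\<Sum>s\<le>n. (1 - b1) * b1 ^ (n - s) * E s) \<le> 2 * (1 - b1 ^ Suc n) * X"
    and SD: "(\<Sum>s\<le>n. (1 - b2) * b2 ^ (n - s) * (E s)^2) \<le> (1 - b2 ^ Suc n) * (16 * b2 * X^2 / (1 - b2)^2)"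
  shows "y n * (((1 / (1 - b1 ^ Suc n)) * (\<Sum>s\<le>n. (1 - b1) * b1 ^ (n - s) * y s))
           / sqrt ((1 / (1 - b2 ^ Suc n)) * (\<Sum>s\<le>n. (1 - b2) * b2 ^ (n - s) * (y s)^2)))
         \<ge> sqrt (1 - b2) * (\<bar>y n\<bar> - K * X)"
proof -
  define g where "g = y n"
  define W1 where "W1 = 1 - b1 ^ Suc n"
  define W2 where "W2 = 1 - b2 ^ Suc n"
  define m where "m = (\<Sum>s\<le>n. (1 - b1) * b1 ^ (n - s) * y s)"
  define v where "v = (\<Sum>s\<le>n. (1 - b2) * b2 ^ (n - s) * (y s)^2)"
  define c where "c = sqrt (1 - b2)"
  have W1p: "0 < W1"
  proof -
    have "b1 ^ Suc n < 1" using power_less_one_iff[of b1 "Suc n"] b1 by simp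
    then show ?thesis unfolding W1_def by simp
  qed
  have W2p: "0 < W2" "W2 \<le> 1"
  proof -
    have "b2 ^ Suc n < 1" using power_less_one_iff[of b2 "Suc n"] b2 by simp
    then show "0 < W2" unfolding W2_def by simp
    show "W2 \<le> 1" unfolding W2_def using b2 by simp
  qed
  have gs1: "(\<Sum>s\<le>n. (1 - b1) * b1 ^ (n - s)) = W1" unfolding W1_def using geom_partial[of n n b1] by simp
  have gs2: "(\<Sum>s\<le>n. (1 - b2) * b2 ^ (n - s)) = W2" unfolding W2_def using geom_partial[of n n b2] by simp
  have cpos: "0 < c" "c \<le> 1" and c2: "c^2 = 1 - b2" unfolding c_def using b2 by auto
  have "(\<Sum>s\<le>n. (1 - b1) * b1 ^ (n - s) * (y s - g)) = m - (\<Sum>s\<le>n. (1 - b1) * b1 ^ (n - s)) * g"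
    unfolding m_def by (simp add: right_diff_distrib sum_subtractf sum_distrib_right)
  then have "m - W1 * g = (\<Sum>s\<le>n. (1 - b1) * b1 ^ (n - s) * (y s - g))"
    unfolding gs1 by (simp add: mult.commute)
  also have "\<bar>\<dots>\<bar> \<le> (\<Sum>s\<le>n. (1 - b1) * b1 ^ (n - s) * E s)"
  proof -
    have "\<bar>\<Sum>s\<le>n. (1 - b1) * b1 ^ (n - s) * (y s - g)\<bar> \<le> (\<Sum>s\<le>n. \<bar>(1 - b1) * b1 ^ (n - s) * (y s - g)\<bar>)"
      by (rule sum_abs)
    also have "\<dots> \<le> (\<Sum>s\<le>n. (1 - b1) * b1 ^ (n - s) * E s)"
      using E b1 unfolding g_def by (intro sum_mono) (auto simp: abs_mult intro!: mult_left_mono)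
    finally show ?thesis .
  qed
  finally have m1: "\<bar>m - W1 * g\<bar> \<le> 2 * W1 * X" using SA unfolding W1_def by simp
  define mh where "mh = m / W1"
  have mh: "\<bar>mh - g\<bar> \<le> 2 * X"
  proof -
    have "mh - g = (m - W1 * g) / W1" unfolding mh_def using W1p by (simp add: field_simps)
    then have "\<bar>mh - g\<bar> = \<bar>m - W1 * g\<bar> / W1" using W1p by simp
    also have "\<dots> \<le> 2 * W1 * X / W1" using m1 W1p by (intro divide_right_mono) auto
    finally show ?thesis using W1p by simp
  qed
  define P where "P = g * mh"
  have P: "P \<ge> \<bar>g\<bar>^2 - (2 * X) * \<bar>g\<bar>"
  proof -
    have "P = g^2 + g * (mh - g)" unfolding P_def by (simp add: power2_eq_square algebra_simps)
    moreover have "g * (mh - g) \<ge> - (\<bar>g\<bar> * (2 * X))"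
    proof -
      have "\<bar>g * (mh - g)\<bar> \<le> \<bar>g\<bar> * (2 * X)" using mh by (simp add: abs_mult mult_left_mono)
      then show ?thesis by linarith
    qed
    ultimately show ?thesis by (simp add: algebra_simps)
  qed
  define S where "S = sqrt (v / W2)"
  have v0: "0 \<le> v" unfolding v_def using b2 by (intro sum_nonneg) auto
  have vg: "v \<ge> (1 - b2) * g^2"
  proof -
    have "(1 - b2) * b2 ^ (n - n) * (y n)^2 \<le> v" unfolding v_def
      using b2 by (intro member_le_sum) auto
    then show ?thesis unfolding g_def by simp
  qed
  have S1: "S \<ge> c * \<bar>g\<bar>"
  proof -
    have "v * W2 \<le> v * 1" using W2p v0 by (intro mult_left_mono) auto
    then have "v \<le> v / W2" using W2p by (simp add: le_divide_eq)
    then have "(1 - b2) * g^2 \<le> v / W2" using vg by simp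
    then have "sqrt ((1 - b2) * g^2) \<le> S" unfolding S_def by (rule real_sqrt_le_mono)
    then show ?thesis unfolding c_def by (simp add: real_sqrt_mult)
  qed
  define D where "D = 4 * sqrt b2 * X / (1 - b2)"
  have D0: "0 \<le> D" unfolding D_def using b2 X by simp
  have S2: "S \<le> \<bar>g\<bar> + D"
  proof -
    have w0: "\<And>s. 0 \<le> (1 - b2) * b2 ^ (s)" using b2 by simp
    have "sqrt v \<le> sqrt (\<Sum>s\<le>n. (1 - b2) * b2 ^ (n - s) * g^2) + sqrt (\<Sum>s\<le>n. (1 - b2) * b2 ^ (n - s) * (y s - g)^2)"
      unfolding v_def by (rule minkowski_w) (use b2 in simp)
    also have "(\<Sum>s\<le>n. (1 - b2) * b2 ^ (n - s) * g^2) = W2 * g^2"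
      unfolding gs2[symmetric] by (simp add: sum_distrib_right)
    also have "(\<Sum>s\<le>n. (1 - b2) * b2 ^ (n - s) * (y s - g)^2) \<le> W2 * (16 * b2 * X^2 / (1 - b2)^2)"
    proof -
      have "(\<Sum>s\<le>n. (1 - b2) * b2 ^ (n - s) * (y s - g)^2) \<le> (\<Sum>s\<le>n. (1 - b2) * b2 ^ (n - s) * (E s)^2)"
      proof (intro sum_mono mult_left_mono)
        fix s assume "s \<in> {..n}"
        then have "\<bar>y s - g\<bar> \<le> E s" using E unfolding g_def by simp
        then show "(y s - g)^2 \<le> (E s)^2"
          by (metis abs_ge_zero abs_le_square_iff abs_of_nonneg order_trans power2_abs)
      qed (use b2 in simp)
      then show ?thesis using SD unfolding W2_def by simp
    qed
    then have "sqrt (\<Sum>s\<le>n. (1 - b2) * b2 ^ (n - s) * (y s - g)^2) \<le> sqrt (W2 * (16 * b2 * X^2 / (1 - b2)^2))"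
      by (rule real_sqrt_le_mono)
    finally have "sqrt v \<le> sqrt (W2 * g^2) + sqrt (W2 * (16 * b2 * X^2 / (1 - b2)^2))" by simp
    also have "\<dots> = sqrt W2 * (\<bar>g\<bar> + D)"
    proof -
      have "sqrt (16 * b2 * X^2 / (1 - b2)^2) = D"
        unfolding D_def using b2 X by (simp add: real_sqrt_mult real_sqrt_divide)
      then show ?thesis by (simp only: real_sqrt_mult real_sqrt_abs distrib_left)
    qed
    finally have "sqrt v \<le> sqrt W2 * (\<bar>g\<bar> + D)" .
    moreover have "S = sqrt v / sqrt W2" unfolding S_def by (simp add: real_sqrt_divide)
    ultimately show ?thesis using W2p by (simp add: divide_le_eq mult.commute)
  qed
  have AD: "2 * X + c * D \<le> K * X"
  proof -
    have cs: "c * sqrt b2 \<le> 1 / 2"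
    proof -
      have "0 \<le> (c - sqrt b2)^2" by simp
      then have "2 * (c * sqrt b2) \<le> c^2 + (sqrt b2)^2" by (simp add: power2_eq_square algebra_simps)
      also have "\<dots> = 1" using c2 b2 by simp
      finally show ?thesis by simp
    qed
    have "c * D = 4 * (c * sqrt b2) * X / c^2" unfolding D_def c2[symmetric]
      using cpos by (simp add: power2_eq_square field_simps)
    also have "\<dots> \<le> 4 * (1/2) * X / c^2" using cs X cpos
      by (intro divide_right_mono mult_right_mono mult_left_mono) auto
    finally have "2 * X + c * D \<le> 2 * X + 2 * X / c^2" by simp
    also have "\<dots> \<le> 2 * X / c^2 + 2 * X / c^2"
    proof -
      have "c^2 \<le> 1" using cpos by (simp add: power_le_one)
      then have "2 * X * c^2 \<le> 2 * X * 1" using X by (intro mult_left_mono) auto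
      then have "2 * X \<le> 2 * X / c^2" using cpos by (simp add: le_divide_eq)
      then show ?thesis by simp
    qed
    also have "\<dots> = (4 / (1 - b2)) * X" using c2 by simp
    also have "\<dots> \<le> K * X" using K X by (intro mult_right_mono) auto
    finally show ?thesis .
  qed
  have AK: "2 * X \<le> c^2 * (K * X)"
  proof -
    have "4 \<le> c^2 * K" using K c2 b2 by (simp add: divide_le_eq mult.commute)
    then have "4 * X \<le> c^2 * K * X" using X by (intro mult_right_mono) auto
    then show ?thesis using X by simp
  qed
  have S0: "S = 0 \<Longrightarrow> P = 0"
  proof -
    assume "S = 0"
    then have "c * \<bar>g\<bar> \<le> 0" using S1 by simp
    then have "g = 0" using cpos by (simp add: mult_le_0_iff)
    then show "P = 0" unfolding P_def by simp
  qed
  have main: "P / S \<ge> c * (\<bar>g\<bar> - K * X)"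
    by (rule final_alg[OF cpos abs_ge_zero P _ S1 S2 D0 AD AK S0]) (use X in simp)
  have "y n * (((1 / (1 - b1 ^ Suc n)) * (\<Sum>s\<le>n. (1 - b1) * b1 ^ (n - s) * y s))
           / sqrt ((1 / (1 - b2 ^ Suc n)) * (\<Sum>s\<le>n. (1 - b2) * b2 ^ (n - s) * (y s)^2))) = P / S"
    unfolding P_def mh_def S_def g_def m_def v_def W1_def W2_def by simp
  then show ?thesis using main unfolding c_def g_def by simp
qed


lemma rank_lt:
  fixes z :: "real^'n::{finite,linorder}"
  assumes p: "\<bar>z$y\<bar> < \<bar>z$x\<bar> \<or> (\<bar>z$x\<bar> = \<bar>z$y\<bar> \<and> x < y)" and b: "blk x = blk y"
  shows "block_rank blk z x < block_rank blk z y"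
proof -
  let ?A = "{i. blk i = blk x \<and> (\<bar>z$x\<bar> < \<bar>z$i\<bar> \<or> (\<bar>z$i\<bar> = \<bar>z$x\<bar> \<and> i < x))}"
  let ?B = "{i. blk i = blk y \<and> (\<bar>z$y\<bar> < \<bar>z$i\<bar> \<or> (\<bar>z$i\<bar> = \<bar>z$y\<bar> \<and> i < y))}"
  have sub: "?A \<subseteq> ?B"
  proof
    fix i assume "i \<in> ?A"
    then show "i \<in> ?B" using p b by (auto intro: less_trans)
  qed
  have "x \<in> ?B" using p b by auto
  moreover have "x \<notin> ?A" by auto
  ultimately have "?A \<subset> ?B" using sub by blast
  then have "card ?A < card ?B" by (intro psubset_card_mono) auto
  then show ?thesis unfolding block_rank_def .
qed

lemma rank_inj:
  fixes z :: "real^'n::{finite,linorder}"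
  shows "inj_on (block_rank blk z) {j. blk j = k}"
proof (rule inj_onI)
  fix i j assume i: "i \<in> {j. blk j = k}" and j: "j \<in> {j. blk j = k}"
    and eq: "block_rank blk z i = block_rank blk z j"
  show "i = j"
  proof (rule ccontr)
    assume ne: "i \<noteq> j"
    have b: "blk i = blk j" using i j by simp
    have "(\<bar>z$j\<bar> < \<bar>z$i\<bar> \<or> (\<bar>z$i\<bar> = \<bar>z$j\<bar> \<and> i < j)) \<or> (\<bar>z$i\<bar> < \<bar>z$j\<bar> \<or> (\<bar>z$j\<bar> = \<bar>z$i\<bar> \<and> j < i))"
      using ne by (metis linorder_neqE linorder_neqE_linordered_idom)
    then show False
    proof
      assume "\<bar>z$j\<bar> < \<bar>z$i\<bar> \<or> (\<bar>z$i\<bar> = \<bar>z$j\<bar> \<and> i < j)"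
      from rank_lt[OF this b] eq show False by simp
    next
      assume "\<bar>z$i\<bar> < \<bar>z$j\<bar> \<or> (\<bar>z$j\<bar> = \<bar>z$i\<bar> \<and> j < i)"
      from rank_lt[OF this b[symmetric]] eq show False by simp
    qed
  qed
qed

lemma card_block_le:
  fixes z :: "real^'n::{finite,linorder}"
  shows "card {j. blk j = k \<and> block_rank blk z j < M} \<le> M"
proof -
  have "card {j. blk j = k \<and> block_rank blk z j < M} \<le> card {..<M}"
  proof (rule card_inj_on_le)
    show "inj_on (block_rank blk z) {j. blk j = k \<and> block_rank blk z j < M}"
      by (rule inj_on_subset[OF rank_inj[of blk z k]]) auto
  qed auto
  then show ?thesis by simp
qed

lemma sum_block_size:
  fixes blk :: "'n::finite \<Rightarrow> nat"
  assumes blk: "\<And>j. blk j < B"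
  shows "(\<Sum>k<B. block_size blk k) = CARD('n)"
proof -
  have "UNIV = (\<Union>k\<in>{..<B}. {j. blk j = k})" using blk by auto
  then have "CARD('n) = card (\<Union>k\<in>{..<B}. {j. blk j = k})" by simp
  also have "\<dots> = (\<Sum>k<B. card {j. blk j = k})"
    by (rule card_UN_disjoint) auto
  finally show ?thesis unfolding block_size_def by simp
qed

lemma FLT_01:
  "FLT blk a z $ j = (if block_rank blk z j < nat \<lceil>real (block_size blk (blk j)) * a\<rceil> then 1 else 0)"
  unfolding FLT_def by simp

lemma FLT_sum:
  fixes z :: "real^'n::{finite,linorder}"
  assumes blk: "\<And>j. blk j < B" and a: "0 \<le> a"
  shows "(\<Sum>j\<in>UNIV. FLT blk a z $ j) \<le> real CARD('n) * a + real B"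
proof -
  define N where "N k = nat \<lceil>real (block_size blk k) * a\<rceil>" for k
  define S where "S = {j. block_rank blk z j < N (blk j)}"
  have "(\<Sum>j\<in>UNIV. FLT blk a z $ j) = (\<Sum>j\<in>UNIV. of_bool (block_rank blk z j < N (blk j)))"
    unfolding FLT_01 N_def by (simp add: of_bool_def)
  also have "\<dots> = real (card S)" unfolding S_def by simp
  finally have e: "(\<Sum>j\<in>UNIV. FLT blk a z $ j) = real (card S)" .
  have "S = (\<Union>k\<in>{..<B}. {j. blk j = k \<and> block_rank blk z j < N k})"
    unfolding S_def using blk by auto
  then have "card S \<le> (\<Sum>k<B. card {j. blk j = k \<and> block_rank blk z j < N k})"
    by (simp add: card_UN_le)
  also have "\<dots> \<le> (\<Sum>k<B. N k)" by (intro sum_mono card_block_le)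
  finally have "real (card S) \<le> (\<Sum>k<B. real (N k))" by (metis of_nat_le_iff of_nat_sum)
  also have "\<dots> \<le> (\<Sum>k<B. real (block_size blk k) * a + 1)"
  proof (intro sum_mono)
    fix k
    have "0 \<le> real (block_size blk k) * a" using a by simp
    then have "real (N k) = real_of_int \<lceil>real (block_size blk k) * a\<rceil>" unfolding N_def by simp
    also have "\<dots> \<le> real (block_size blk k) * a + 1" using ceiling_correct[of "real (block_size blk k) * a"] by linarith
    finally show "real (N k) \<le> real (block_size blk k) * a + 1" .
  qed
  also have "\<dots> = real (\<Sum>k<B. block_size blk k) * a + real B"
    by (simp add: sum.distrib sum_distrib_right)
  also have "\<dots> = real CARD('n) * a + real B"
  proof -
    have hs: "(\<Sum>k<B. block_size blk k) = CARD('n)" using sum_block_size blk by blast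
    show ?thesis unfolding hs ..
  qed
  finally show ?thesis using e by simp
qed


lemma ratio_step:
  fixes m v g b1 b2 :: real
  assumes b: "0 < b1" "b1 < sqrt b2" "b2 < 1" and v: "0 \<le> v"
    and h: "\<bar>m\<bar> \<le> (1 - b1) * (1 / (sqrt (1 - b2) * (1 - b1 / sqrt b2))) * sqrt v"
  shows "\<bar>b1 * m + (1 - b1) * g\<bar> \<le> (1 - b1) * (1 / (sqrt (1 - b2) * (1 - b1 / sqrt b2))) * sqrt (b2 * v + (1 - b2) * g^2)"
proof -
  define c where "c = sqrt (1 - b2)"
  define r where "r = b1 / sqrt b2"
  define M where "M = 1 / (c * (1 - r))"
  define V where "V = b2 * v + (1 - b2) * g^2"
  have sb: "0 < sqrt b2" using b by linarith
  have b2p: "0 < b2" using sb by simp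
  have "sqrt b2 < 1" using b by simp
  then have b1l: "b1 < 1" using b by linarith
  have cp: "0 < c" unfolding c_def using b by simp
  have r: "0 < r" "r < 1" unfolding r_def using b sb by (auto simp: divide_less_eq)
  have Mp: "0 < M" unfolding M_def using cp r by simp
  have V0: "0 \<le> V" unfolding V_def using b2p b v by simp
  have hv: "sqrt b2 * sqrt v \<le> sqrt V"
  proof -
    have "b2 * v \<le> V" unfolding V_def using b by simp
    then have "sqrt (b2 * v) \<le> sqrt V" by (rule real_sqrt_le_mono)
    then show ?thesis by (simp add: real_sqrt_mult)
  qed
  have hg: "c * \<bar>g\<bar> \<le> sqrt V"
  proof -
    have "(1 - b2) * g^2 \<le> V" unfolding V_def using b2p v by simp
    then have "sqrt ((1 - b2) * g^2) \<le> sqrt V" by (rule real_sqrt_le_mono)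
    then show ?thesis unfolding c_def by (simp add: real_sqrt_mult)
  qed
  have t0: "\<bar>b1 * m + (1 - b1) * g\<bar> \<le> \<bar>b1 * m\<bar> + \<bar>(1 - b1) * g\<bar>" by (rule abs_triangle_ineq)
  have t0': "\<bar>b1 * m\<bar> + \<bar>(1 - b1) * g\<bar> = b1 * \<bar>m\<bar> + (1 - b1) * \<bar>g\<bar>" using b b1l by (simp add: abs_mult)
  have t1: "b1 * \<bar>m\<bar> \<le> b1 * ((1 - b1) * M * sqrt v)"
    using h b unfolding M_def c_def r_def by (intro mult_left_mono) auto
  have t2: "b1 * ((1 - b1) * M * sqrt v) = (1 - b1) * M * r * (sqrt b2 * sqrt v)"
    unfolding r_def using sb by (simp add: field_simps)
  have t3: "(1 - b1) * M * r * (sqrt b2 * sqrt v) \<le> (1 - b1) * M * r * sqrt V"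
    using hv b1l Mp r by (intro mult_left_mono) auto
  have t4: "(1 - b1) * \<bar>g\<bar> = (1 - b1) * M * (1 - r) * (c * \<bar>g\<bar>)"
    unfolding M_def using cp r by (simp add: field_simps)
  have t5: "(1 - b1) * M * (1 - r) * (c * \<bar>g\<bar>) \<le> (1 - b1) * M * (1 - r) * sqrt V"
    using hg b1l Mp r by (intro mult_left_mono) auto
  have t6: "(1 - b1) * M * r * sqrt V + (1 - b1) * M * (1 - r) * sqrt V = (1 - b1) * M * sqrt V"
    by (simp add: algebra_simps)
  have "\<bar>b1 * m + (1 - b1) * g\<bar> \<le> (1 - b1) * M * sqrt V"
    using t0 t0' t1 t2 t3 t4 t5 t6 by linarith
  then show ?thesis unfolding M_def c_def r_def V_def .
qed

context
  fixes G :: "(real^'n::{finite,linorder}) \<Rightarrow> (real^'n::{finite,linorder})" and blk :: "'n::{finite,linorder} \<Rightarrow> nat"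
    and a b1 b2 :: real and eta :: "nat \<Rightarrow> real" and th0 :: "(real^'n::{finite,linorder})"
begin

abbreviation "mofoT \<equiv> mofo_theta G blk a b1 b2 eta th0"
abbreviation "mofoM \<equiv> mofo_m G blk a b1 b2 eta th0"
abbreviation "mofoV \<equiv> mofo_v G blk a b1 b2 eta th0"

lemma mofo_0: "mofoM 0 = 0" "mofoV 0 = 0"
  unfolding mofo_m_def mofo_v_def by simp_all

lemma mofo_Suc:
  "mofoM (Suc t) = b1 *\<^sub>R mofoM t + (1 - b1) *\<^sub>R G (mofoT t)"
  "mofoV (Suc t) = b2 *\<^sub>R mofoV t + (1 - b2) *\<^sub>R (\<chi> i. (G (mofoT t) $ i)^2)"
  "mofoT (Suc t) = mofoT t - (\<chi> i. eta (Suc t) * ((((1 / (1 - b1 ^ Suc t)) *\<^sub>R mofoM (Suc t)) $ i) * (FLT blk a (mofoM (Suc t)) $ i))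
                        / sqrt (((1 / (1 - b2 ^ Suc t)) *\<^sub>R mofoV (Suc t)) $ i))"
proof -
  obtain x m v where e: "mofo G blk a b1 b2 eta th0 t = (x, m, v)" by (cases "mofo G blk a b1 b2 eta th0 t") auto
  show "mofoM (Suc t) = b1 *\<^sub>R mofoM t + (1 - b1) *\<^sub>R G (mofoT t)"
    unfolding mofo_m_def mofo_theta_def by (simp add: e Let_def)
  show "mofoV (Suc t) = b2 *\<^sub>R mofoV t + (1 - b2) *\<^sub>R (\<chi> i. (G (mofoT t) $ i)^2)"
    unfolding mofo_v_def mofo_theta_def by (simp add: e Let_def)
  show "mofoT (Suc t) = mofoT t - (\<chi> i. eta (Suc t) * ((((1 / (1 - b1 ^ Suc t)) *\<^sub>R mofoM (Suc t)) $ i) * (FLT blk a (mofoM (Suc t)) $ i))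
                        / sqrt (((1 / (1 - b2 ^ Suc t)) *\<^sub>R mofoV (Suc t)) $ i))"
    unfolding mofo_v_def mofo_theta_def mofo_m_def by (simp add: e Let_def)
qed

lemma m_closed: "mofoM (Suc n) $ i = (\<Sum>s\<le>n. (1 - b1) * b1 ^ (n - s) * G (mofoT s) $ i)"
proof (induction n)
  case 0 then show ?case by (simp add: mofo_Suc mofo_0)
next
  case (Suc n)
  have "mofoM (Suc (Suc n)) $ i = b1 * mofoM (Suc n) $ i + (1 - b1) * G (mofoT (Suc n)) $ i"
    by (simp add: mofo_Suc(1)[of "Suc n"])
  also have "\<dots> = (\<Sum>s\<le>n. (1 - b1) * b1 ^ (Suc n - s) * G (mofoT s) $ i) + (1 - b1) * G (mofoT (Suc n)) $ i"
    unfolding Suc.IH by (simp add: sum_distrib_left Suc_diff_le mult.assoc mult.left_commute)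
  also have "\<dots> = (\<Sum>s\<le>Suc n. (1 - b1) * b1 ^ (Suc n - s) * G (mofoT s) $ i)" by simp
  finally show ?case .
qed

lemma v_closed: "mofoV (Suc n) $ i = (\<Sum>s\<le>n. (1 - b2) * b2 ^ (n - s) * (G (mofoT s) $ i)^2)"
proof (induction n)
  case 0 then show ?case by (simp add: mofo_Suc mofo_0)
next
  case (Suc n)
  have "mofoV (Suc (Suc n)) $ i = b2 * mofoV (Suc n) $ i + (1 - b2) * (G (mofoT (Suc n)) $ i)^2"
    by (simp add: mofo_Suc(2)[of "Suc n"])
  also have "\<dots> = (\<Sum>s\<le>n. (1 - b2) * b2 ^ (Suc n - s) * (G (mofoT s) $ i)^2) + (1 - b2) * (G (mofoT (Suc n)) $ i)^2"
    unfolding Suc.IH by (simp add: sum_distrib_left Suc_diff_le mult.assoc mult.left_commute)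
  also have "\<dots> = (\<Sum>s\<le>Suc n. (1 - b2) * b2 ^ (Suc n - s) * (G (mofoT s) $ i)^2)" by simp
  finally show ?case .
qed

lemma ratio:
  assumes b: "0 < b1" "b1 < sqrt b2" "b2 < 1"
  shows "0 \<le> mofoV r $ j \<and> \<bar>mofoM r $ j\<bar> \<le> (1 - b1) * (1 / (sqrt (1 - b2) * (1 - b1 / sqrt b2))) * sqrt (mofoV r $ j)"
proof (induction r)
  case 0 then show ?case by (simp add: mofo_0)
next
  case (Suc r)
  have "0 < sqrt b2" using b by linarith
  then have b2p: "0 < b2" by simp
  have "0 \<le> mofoV (Suc r) $ j" using Suc.IH b2p b by (simp add: mofo_Suc)
  moreover have "\<bar>mofoM (Suc r) $ j\<bar> \<le> (1 - b1) * (1 / (sqrt (1 - b2) * (1 - b1 / sqrt b2))) * sqrt (mofoV (Suc r) $ j)"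
    using ratio_step[OF b, of "mofoV r $ j" "mofoM r $ j" "G (mofoT r) $ j"] Suc.IH by (simp add: mofo_Suc)
  ultimately show ?case by simp
qed

end


lemma coord_bound:
  fixes m v W1 W2 Mx :: real
  assumes v: "0 \<le> v" and h: "\<bar>m\<bar> \<le> Mx * sqrt v" and W1: "0 < W1" and W2: "0 < W2" "W2 \<le> 1" and Mx: "0 \<le> Mx"
  shows "\<bar>(1 / W1 * m) / sqrt (1 / W2 * v)\<bar> \<le> Mx / W1"
proof (cases "v = 0")
  case True
  then show ?thesis using W1 Mx by simp
next
  case False
  then have vp: "0 < v" using v by simp
  have s1: "sqrt v \<le> sqrt (1 / W2 * v)"
    using W2 v by (intro real_sqrt_le_mono) (simp add: field_simps mult_left_le_one_le)
  have sp: "0 < sqrt v" using vp by simp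
  have "\<bar>(1 / W1 * m) / sqrt (1 / W2 * v)\<bar> = (\<bar>m\<bar> / W1) / sqrt (1 / W2 * v)"
    using W1 W2 v by (simp add: abs_mult abs_divide)
  also have "\<dots> \<le> (\<bar>m\<bar> / W1) / sqrt v"
    using s1 sp W1 by (intro divide_left_mono) auto
  also have "\<dots> \<le> (Mx * sqrt v / W1) / sqrt v"
    using h W1 sp by (intro divide_right_mono) auto
  also have "\<dots> = Mx / W1" using sp by simp
  finally show ?thesis .
qed

context
  fixes G :: "(real^'n::{finite,linorder}) \<Rightarrow> (real^'n::{finite,linorder})" and blk :: "'n::{finite,linorder} \<Rightarrow> nat"
    and a b1 b2 :: real and eta :: "nat \<Rightarrow> real" and th0 :: "(real^'n::{finite,linorder})"
begin

lemma step_bound: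
  assumes b: "0 < b1" "b1 < sqrt b2" "b2 < 1" and blk: "\<And>j. blk j < B" and a: "0 \<le> a"
    and e: "0 \<le> eta (Suc r)"
  shows "norm (mofo_theta G blk a b1 b2 eta th0 (Suc r) - mofo_theta G blk a b1 b2 eta th0 r)
    \<le> eta (Suc r) * ((1 - b1) / (1 - b1 ^ Suc r) * (1 / (sqrt (1 - b2) * (1 - b1 / sqrt b2))))
        * sqrt (real CARD('n) * a + real B)"
proof -
  define M where "M = 1 / (sqrt (1 - b2) * (1 - b1 / sqrt b2))"
  define Q where "Q = (1 - b1) / (1 - b1 ^ Suc r) * M"
  define f where "f j = FLT blk a (mofo_m G blk a b1 b2 eta th0 (Suc r)) $ j" for j
  define q where "q j = (((1 / (1 - b1 ^ Suc r)) *\<^sub>R mofo_m G blk a b1 b2 eta th0 (Suc r)) $ j)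
                    / sqrt (((1 / (1 - b2 ^ Suc r)) *\<^sub>R mofo_v G blk a b1 b2 eta th0 (Suc r)) $ j)" for j
  define x where "x = (\<chi> j. eta (Suc r) * ((((1 / (1 - b1 ^ Suc r)) *\<^sub>R mofo_m G blk a b1 b2 eta th0 (Suc r)) $ j) * f j)
                        / sqrt (((1 / (1 - b2 ^ Suc r)) *\<^sub>R mofo_v G blk a b1 b2 eta th0 (Suc r)) $ j))"
  have sb: "0 < sqrt b2" using b by linarith
  have b2p: "0 < b2" using sb by simp
  have "sqrt b2 < 1" using b by simp
  then have b1l: "b1 < 1" using b by linarith
  have Mp: "0 < M" unfolding M_def using b sb by (simp add: divide_less_eq)
  have W1: "0 < 1 - b1 ^ Suc r" using power_less_one_iff[of b1 "Suc r"] b b1l by simp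
  have W2: "0 < 1 - b2 ^ Suc r" "1 - b2 ^ Suc r \<le> 1" using power_less_one_iff[of b2 "Suc r"] b2p b by simp_all
  have Q0: "0 \<le> Q" unfolding Q_def using W1 Mp b1l by simp
  have f01: "f j = 0 \<or> f j = 1" for j unfolding f_def FLT_01 by simp
  have qb: "\<bar>q j\<bar> \<le> Q" for j
  proof -
    have r: "0 \<le> mofo_v G blk a b1 b2 eta th0 (Suc r) $ j \<and>
      \<bar>mofo_m G blk a b1 b2 eta th0 (Suc r) $ j\<bar> \<le> (1 - b1) * M * sqrt (mofo_v G blk a b1 b2 eta th0 (Suc r) $ j)"
      unfolding M_def by (rule ratio[OF b])
    have "\<bar>(1 / (1 - b1 ^ Suc r) * mofo_m G blk a b1 b2 eta th0 (Suc r) $ j) /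
           sqrt (1 / (1 - b2 ^ Suc r) * mofo_v G blk a b1 b2 eta th0 (Suc r) $ j)\<bar> \<le> (1 - b1) * M / (1 - b1 ^ Suc r)"
      by (rule coord_bound) (use r W1 W2 Mp b1l in auto)
    then show ?thesis unfolding q_def Q_def by simp
  qed
  have xj: "(x $ j)^2 \<le> (eta (Suc r) * Q)^2 * f j" for j
  proof -
    have "x $ j = eta (Suc r) * f j * q j" unfolding x_def q_def by simp
    then have "\<bar>x $ j\<bar> = eta (Suc r) * f j * \<bar>q j\<bar>" using e f01[of j] by (auto simp: abs_mult)
    also have "\<dots> \<le> eta (Suc r) * f j * Q" using qb[of j] e f01[of j] by (intro mult_left_mono) auto
    finally have h: "\<bar>x $ j\<bar> \<le> eta (Suc r) * f j * Q" .
    have "(x $ j)^2 = \<bar>x $ j\<bar>^2" by simp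
    also have "\<dots> \<le> (eta (Suc r) * f j * Q)^2" using h by (intro power_mono) auto
    also have "\<dots> = (eta (Suc r) * Q)^2 * f j" using f01[of j] by (auto simp: power2_eq_square)
    finally show ?thesis .
  qed
  have "mofo_theta G blk a b1 b2 eta th0 (Suc r) - mofo_theta G blk a b1 b2 eta th0 r = - x"
    unfolding x_def f_def by (simp add: mofo_Suc)
  then have "norm (mofo_theta G blk a b1 b2 eta th0 (Suc r) - mofo_theta G blk a b1 b2 eta th0 r) = norm x" by simp
  also have "norm x = sqrt (\<Sum>j\<in>UNIV. (x $ j)^2)" unfolding norm_vec_def L2_set_def by simp
  also have "\<dots> \<le> sqrt (\<Sum>j\<in>UNIV. (eta (Suc r) * Q)^2 * f j)" by (intro real_sqrt_le_mono sum_mono xj)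
  also have "(\<Sum>j\<in>UNIV. (eta (Suc r) * Q)^2 * f j) = (eta (Suc r) * Q)^2 * (\<Sum>j\<in>UNIV. f j)"
    by (simp add: sum_distrib_left)
  also have "sqrt \<dots> \<le> sqrt ((eta (Suc r) * Q)^2 * (real CARD('n) * a + real B))"
    unfolding f_def by (intro real_sqrt_le_mono mult_left_mono FLT_sum blk a) auto
  also have "\<dots> = eta (Suc r) * Q * sqrt (real CARD('n) * a + real B)"
    using e Q0 by (simp add: real_sqrt_mult)
  finally show ?thesis unfolding Q_def M_def .
qed

end

lemma lip_coord:
  fixes G :: "(real^'n::{finite,linorder}) \<Rightarrow> (real^'n::{finite,linorder})"
  assumes "Lc-lipschitz_on UNIV G"
  shows "\<bar>G x $ i - G y $ i\<bar> \<le> Lc * norm (x - y)"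
proof -
  have "\<bar>G x $ i - G y $ i\<bar> = \<bar>(G x - G y) $ i\<bar>" by simp
  also have "\<dots> \<le> norm (G x - G y)" by (rule component_le_norm_cart)
  also have "\<dots> = dist (G x) (G y)" by (simp add: dist_norm)
  also have "\<dots> \<le> Lc * dist x y" using lipschitz_onD[OF assms] by simp
  finally show ?thesis by (simp add: dist_norm)
qed

lemma telescope_norm:
  fixes th :: "nat \<Rightarrow> 'a::real_normed_vector"
  assumes "s \<le> n"
  shows "norm (th n - th s) \<le> (\<Sum>r\<in>{s..<n}. norm (th (Suc r) - th r))"
proof -
  have "th n - th s = (\<Sum>r\<in>{s..<n}. th (Suc r) - th r)" using sum_Suc_diff'[OF assms, of th] by simp
  then show ?thesis by (simp add: norm_sum)
qed


theorem lemma4: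
  fixes Loss :: "(real^'n::{finite,linorder}) \<Rightarrow> real"
    and G :: "(real^'n::{finite,linorder}) \<Rightarrow> (real^'n::{finite,linorder})"
    and blk :: "'n::{finite,linorder} \<Rightarrow> nat"
    and B :: nat
    and a b1 b2 eta Lc :: real
    and th0 :: "(real^'n::{finite,linorder})"
  assumes grad: "\<And>x. GDERIV Loss x :> G x"
    and lip: "Lc-lipschitz_on UNIV G"
    and blocks: "\<And>i. blk i < B"
    and a: "0 < a" "a \<le> 1"
    and b: "0 < b1" "b1 < sqrt b2" "b2 < 1"
    and eta: "0 < eta"
    and t: "1 \<le> t"
  shows
    "let etas = (\<lambda>s::nat. eta / sqrt (real s));
         g = G (mofo_theta G blk a b1 b2 etas th0 (t - 1));
         mh = (1 / (1 - b1 ^ t)) *\<^sub>R mofo_m G blk a b1 b2 etas th0 t;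
         vh = (1 / (1 - b2 ^ t)) *\<^sub>R mofo_v G blk a b1 b2 etas th0 t;
         C = sqrt (real CARD('n::{finite,linorder}) * a + real B) / (sqrt (1 - b2) * (1 - b1 / sqrt b2))
     in g$i * (mh$i / sqrt (vh$i)) \<ge>
        sqrt (1 - b2) * (\<bar>g$i\<bar> -
          (2 * sqrt 2 * b1 / (1 - b1)^2 + 4 / (1 - b2)) * Lc * C * eta / sqrt (real t))"
proof -
  obtain n where tn: "t = Suc n" using t by (cases t) auto
  define etas where "etas = (\<lambda>s::nat. eta / sqrt (real s))"
  define M where "M = 1 / (sqrt (1 - b2) * (1 - b1 / sqrt b2))"
  define C where "C = sqrt (real CARD('n) * a + real B) / (sqrt (1 - b2) * (1 - b1 / sqrt b2))"
  define X where "X = Lc * C * eta / sqrt (real t)"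
  define K where "K = 2 * sqrt 2 * b1 / (1 - b1)^2 + 4 / (1 - b2)"
  define thh where "thh = mofo_theta G blk a b1 b2 etas th0"
  define y where "y s = G (thh s) $ i" for s
  define nu where "nu r = (1 - b1) / (1 - b1 ^ Suc r) / sqrt (real r + 1)" for r
  define E where "E s = Lc * C * eta * (\<Sum>r\<in>{s..<n}. nu r)" for s
  have sb: "0 < sqrt b2" using b by linarith
  have b2p: "0 < b2" using sb by simp
  have "sqrt b2 < 1" using b by simp
  then have b1l: "b1 < 1" using b by linarith
  have L0: "0 \<le> Lc" using lipschitz_on_nonneg[OF lip] .
  have Mp: "0 < M" unfolding M_def using b sb by (simp add: divide_less_eq)
  have CM: "C = M * sqrt (real CARD('n) * a + real B)" unfolding C_def M_def by simp
  have C0: "0 \<le> C" unfolding CM using Mp a by simp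
  have X0: "0 \<le> X" unfolding X_def using L0 C0 eta by simp
  have nu0: "0 \<le> nu r" for r
  proof -
    have "0 < 1 - b1 ^ Suc r" using power_less_one_iff[of b1 "Suc r"] b b1l by simp
    then show ?thesis unfolding nu_def using b1l by simp
  qed
  have nu1: "nu r \<le> 1 / sqrt (real r + 1)" for r
  proof -
    have "b1 ^ Suc r \<le> b1 ^ 1" by (rule power_decreasing) (use b b1l in auto)
    then have le: "1 - b1 \<le> 1 - b1 ^ Suc r" by simp
    have p: "0 < 1 - b1" using b1l by simp
    have "(1 - b1) / (1 - b1 ^ Suc r) \<le> 1" using le p by simp
    then show ?thesis unfolding nu_def by (intro divide_right_mono) auto
  qed
  have step: "norm (thh (Suc r) - thh r) \<le> C * eta * nu r" for r
  proof -
    have e0: "0 \<le> etas (Suc r)" unfolding etas_def using eta by simp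
    have "norm (thh (Suc r) - thh r) \<le> etas (Suc r) * ((1 - b1) / (1 - b1 ^ Suc r) * M) * sqrt (real CARD('n) * a + real B)"
      unfolding thh_def M_def by (rule step_bound) (use b blocks a e0 in auto)
    also have "\<dots> = C * eta * nu r"
      unfolding etas_def nu_def CM by (simp add: field_simps add.commute)
    finally show ?thesis .
  qed
  have Eb: "\<bar>y s - y n\<bar> \<le> E s" if sn: "s \<le> n" for s
  proof -
    have "\<bar>y s - y n\<bar> \<le> Lc * norm (thh s - thh n)" unfolding y_def by (rule lip_coord[OF lip])
    also have "\<dots> = Lc * norm (thh n - thh s)" by (simp add: norm_minus_commute)
    also have "\<dots> \<le> Lc * (\<Sum>r\<in>{s..<n}. norm (thh (Suc r) - thh r))"
      using telescope_norm[OF sn, of thh] L0 by (intro mult_left_mono) auto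
    also have "\<dots> \<le> Lc * (\<Sum>r\<in>{s..<n}. C * eta * nu r)"
      using step L0 by (intro mult_left_mono sum_mono) auto
    also have "\<dots> = E s" unfolding E_def by (simp add: sum_distrib_left mult.assoc)
    finally show ?thesis .
  qed
  have rt: "real t = real n + 1" using tn by simp
  have SA: "(\<Sum>s\<le>n. (1 - b1) * b1 ^ (n - s) * E s) \<le> 2 * (1 - b1 ^ Suc n) * X"
  proof -
    have "(\<Sum>s\<le>n. (1 - b1) * b1 ^ (n - s) * E s)
        = Lc * C * eta * (\<Sum>s\<le>n. (1 - b1) * b1 ^ (n - s) * (\<Sum>r\<in>{s..<n}. (1 - b1) / (1 - b1 ^ Suc r) / sqrt (real r + 1)))"
      unfolding E_def nu_def by (simp add: sum_distrib_left mult.assoc mult.left_commute)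
    also have "\<dots> \<le> Lc * C * eta * (2 * (1 - b1 ^ Suc n) / sqrt (real n + 1))"
      using A_sum_bound[of b1 n] b b1l L0 C0 eta by (intro mult_left_mono) auto
    also have "\<dots> = 2 * (1 - b1 ^ Suc n) * X" unfolding X_def rt by simp
    finally show ?thesis .
  qed
  have Ebd: "0 \<le> E s \<and> E s \<le> 2 * sqrt 2 * (real n - real s) * X" if sn: "s \<le> n" for s
  proof -
    have "0 \<le> (\<Sum>r\<in>{s..<n}. nu r)" using nu0 by (intro sum_nonneg) auto
    then have E0: "0 \<le> E s" unfolding E_def using L0 C0 eta by simp
    have "(\<Sum>r\<in>{s..<n}. nu r) \<le> (\<Sum>r\<in>{s..<n}. 1 / sqrt (real r + 1))" using nu1 by (intro sum_mono) auto
    also have "\<dots> \<le> 2 * sqrt 2 * (real n - real s) / sqrt (real n + 1)" by (rule sum_inv_sqrt'[OF sn])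
    finally have "E s \<le> Lc * C * eta * (2 * sqrt 2 * (real n - real s) / sqrt (real n + 1))"
      unfolding E_def using L0 C0 eta by (intro mult_left_mono) auto
    also have "\<dots> = 2 * sqrt 2 * (real n - real s) * X" unfolding X_def rt by simp
    finally show ?thesis using E0 by simp
  qed
  have SD: "(\<Sum>s\<le>n. (1 - b2) * b2 ^ (n - s) * (E s)^2) \<le> (1 - b2 ^ Suc n) * (16 * b2 * X^2 / (1 - b2)^2)"
  proof -
    have "(\<Sum>s\<le>n. (1 - b2) * b2 ^ (n - s) * (E s)^2) \<le> (\<Sum>s\<le>n. (1 - b2) * b2 ^ (n - s) * (8 * X^2 * (real (n - s))^2))"
    proof (intro sum_mono mult_left_mono)
      fix s assume "s \<in> {..n}"
      then have sn: "s \<le> n" by simp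
      have h: "0 \<le> E s" "E s \<le> 2 * sqrt 2 * (real n - real s) * X" using Ebd[OF sn] by auto
      have "(E s)^2 \<le> (2 * sqrt 2 * (real n - real s) * X)^2" using h by (intro power_mono) auto
      also have "\<dots> = 8 * X^2 * (real (n - s))^2" using sn by (simp add: power_mult_distrib of_nat_diff)
      finally show "(E s)^2 \<le> 8 * X^2 * (real (n - s))^2" .
    qed (use b2p b in auto)
    also have "\<dots> = 8 * X^2 * ((1 - b2) * (\<Sum>s\<le>n. b2 ^ (n - s) * (real (n - s))^2))"
      by (simp add: sum_distrib_left mult.assoc mult.left_commute)
    also have "(\<Sum>s\<le>n. b2 ^ (n - s) * (real (n - s))^2) = (\<Sum>k\<le>n. b2 ^ k * (real k)^2)"
      by (rule sum.reindex_bij_witness[where i="\<lambda>k. n - k" and j="\<lambda>k. n - k"]) auto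
    also have "8 * X^2 * ((1 - b2) * (\<Sum>k\<le>n. b2 ^ k * (real k)^2)) \<le> 8 * X^2 * ((1 - b2 ^ Suc n) * (b2 * (1 + b2) / (1 - b2)^2))"
      using moment_bound[of b2 n] b2p b by (intro mult_left_mono) auto
    also have "\<dots> \<le> (1 - b2 ^ Suc n) * (16 * b2 * X^2 / (1 - b2)^2)"
    proof -
      have W: "0 \<le> 1 - b2 ^ Suc n" using power_le_one[of b2 "Suc n"] b2p b by simp
      have "b2 * (1 + b2) \<le> b2 * 2" using b2p b by simp
      then have "b2 * (1 + b2) / (1 - b2)^2 \<le> b2 * 2 / (1 - b2)^2" by (intro divide_right_mono) auto
      then have "8 * X^2 * ((1 - b2 ^ Suc n) * (b2 * (1 + b2) / (1 - b2)^2)) \<le> 8 * X^2 * ((1 - b2 ^ Suc n) * (b2 * 2 / (1 - b2)^2))"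
        using W by (intro mult_left_mono) auto
      also have "\<dots> = (1 - b2 ^ Suc n) * (16 * b2 * X^2 / (1 - b2)^2)" by (simp add: field_simps)
      finally show ?thesis .
    qed
    finally show ?thesis .
  qed
  have K4: "4 / (1 - b2) \<le> K" unfolding K_def using b b1l by simp
  have main: "y n * (((1 / (1 - b1 ^ Suc n)) * (\<Sum>s\<le>n. (1 - b1) * b1 ^ (n - s) * y s))
           / sqrt ((1 / (1 - b2 ^ Suc n)) * (\<Sum>s\<le>n. (1 - b2) * b2 ^ (n - s) * (y s)^2)))
         \<ge> sqrt (1 - b2) * (\<bar>y n\<bar> - K * X)"
    by (rule core[OF _ b1l b2p b(3) X0 K4 Eb SA SD]) (use b in auto)
  have mc: "mofo_m G blk a b1 b2 etas th0 (Suc n) $ i = (\<Sum>s\<le>n. (1 - b1) * b1 ^ (n - s) * y s)"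
    unfolding y_def thh_def by (rule m_closed)
  have vc: "mofo_v G blk a b1 b2 etas th0 (Suc n) $ i = (\<Sum>s\<le>n. (1 - b2) * b2 ^ (n - s) * (y s)^2)"
    unfolding y_def thh_def by (rule v_closed)
  have yn: "G (mofo_theta G blk a b1 b2 etas th0 (t - 1)) $ i = y n" unfolding y_def thh_def tn by simp
  have KX: "K * Lc * C * eta / sqrt (real t) = K * X" unfolding X_def by simp
  have goal: "G (mofo_theta G blk a b1 b2 etas th0 (t - 1)) $ i *
      (((1 / (1 - b1 ^ t)) *\<^sub>R mofo_m G blk a b1 b2 etas th0 t) $ i / sqrt (((1 / (1 - b2 ^ t)) *\<^sub>R mofo_v G blk a b1 b2 etas th0 t) $ i))
      \<ge> sqrt (1 - b2) * (\<bar>G (mofo_theta G blk a b1 b2 etas th0 (t - 1)) $ i\<bar> - K * Lc * C * eta / sqrt (real t))"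
    using main unfolding yn KX by (simp add: mc vc tn)
  then show ?thesis unfolding Let_def etas_def K_def C_def .
qed

end
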